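(* Let $s$ be a positive integer, $\alpha_1,\dotsc,\alpha_d\in\mathbb{C}$, $z_1,\dotsc,z_d\in\mathbb{C}$, and $Q(z)=\sum_{j=1}^d\alpha_j(z-z_j)^{-s}$. Then for every $n\ge0$, $y=Q^{(n)}$ satisfies $$\sum_{i=0}^d\frac{e_i(z)}{(s+n)(s+n+1)\cdots(s+n+i-1)}\frac{\mathrm{d}^iy}{\mathrm{d}z^i}=0,$$ where $e_i(z)$ is the $i$-th elementary symmetric function of the $d$ quantities $z-z_1,\dotsc,z-z_d$, and $e_0=1$ (the empty product in the denominator for $i=0$ is $1$). *)

theory Defs
  imports "HOL-Analysis.Analysis"
begin

definition elem_sym :: "(nat \<Rightarrow> complex) \<Rightarrow> nat \<Rightarrow> nat \<Rightarrow> complex \<Rightarrow> complex" where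
  "elem_sym zs d i z = (\<Sum>S\<in>{S. S \<subseteq> {1..d} \<and> card S = i}. \<Prod>j\<in>S. z - zs j)"

end

theory Submission
  imports Defs
begin

lemma esym_gen:
  fixes t z :: complex
  shows "(\<Sum>i=0..d. elem_sym zs d i z * t ^ i) = (\<Prod>k\<in>{1..d}. t * (z - zs k) + 1)"
proof -
  have "(\<Prod>k\<in>{1..d}. t * (z - zs k) + 1) = (\<Sum>X\<in>Pow {1..d}. (\<Prod>k\<in>X. t * (z - zs k)))"
    by (subst prod_add) auto
  also have "\<dots> = (\<Sum>X\<in>Pow {1..d}. t ^ card X * (\<Prod>k\<in>X. z - zs k))"
    by (rule sum.cong) (auto simp: prod.distrib)
  also have "\<dots> = (\<Sum>i\<in>{0..d}. \<Sum>X\<in>{X. X \<in> Pow {1..d} \<and> card X = i}. t ^ card X * (\<Prod>k\<in>X. z - zs k))"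
  proof (rule sum.group[symmetric])
    show "card ` Pow {1..d} \<subseteq> {0..d}"
      using card_mono[of "{1..d}"] by fastforce
  qed auto
  also have "\<dots> = (\<Sum>i=0..d. elem_sym zs d i z * t ^ i)"
    unfolding elem_sym_def sum_distrib_right
    by (intro sum.cong refl) (auto simp: mult.commute)
  finally show ?thesis by simp
qed

lemma deriv_pow_term:
  fixes a c :: complex and m :: nat
  assumes "w \<noteq> a"
  shows "((\<lambda>x. c / (x - a) ^ m) has_field_derivative (- c * of_nat m / (w - a) ^ (m + 1))) (at w)"
proof (cases m)
  case 0 then show ?thesis by (auto intro!: derivative_eq_intros)
next
  case (Suc k)
  have ne: "w - a \<noteq> 0" using assms by simp
  have D: "((\<lambda>x. c / (x - a) ^ m) has_field_derivative
      (- (c * (of_nat m * (w - a) ^ (m - 1) * 1)) / ((w - a) ^ m * (w - a) ^ m))) (at w)"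
    using ne by (auto intro!: derivative_eq_intros)
  have e: "(w - a) ^ m * (w - a) ^ m = (w - a) ^ (m - 1) * (w - a) ^ (m + 1)"
    unfolding Suc by (simp add: power_add[symmetric])
  have p: "(w - a) ^ (m - 1) \<noteq> 0" using ne by simp
  have v: "\<And>p q :: complex. p \<noteq> 0 \<Longrightarrow> - (c * (of_nat m * p * 1)) / (p * q) = - c * of_nat m / q"
    by (simp add: field_simps)
  show ?thesis using D unfolding e v[OF p] .
qed

lemma derivs_Q:
  fixes s d :: nat and \<alpha> zs :: "nat \<Rightarrow> complex" and Q :: "complex \<Rightarrow> complex"
  assumes Q: "\<And>z. Q z = (\<Sum>j=1..d. \<alpha> j / (z - zs j) ^ s)"
  shows "z \<notin> zs ` {1..d} \<Longrightarrow> (deriv ^^ k) Q z =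
     (\<Sum>j=1..d. \<alpha> j * (-1) ^ k * pochhammer (of_nat s) k / (z - zs j) ^ (s + k))"
proof (induction k arbitrary: z)
  case 0
  then show ?case by (simp add: Q)
next
  case (Suc k)
  define F where "F = (\<lambda>w. (\<Sum>j=1..d. \<alpha> j * (-1) ^ k * pochhammer (of_nat s) k / (w - zs j) ^ (s + k)))"
  have op: "open (- (zs ` {1..d}))" by (intro open_Compl finite_imp_closed) auto
  have ev: "eventually (\<lambda>w. (deriv ^^ k) Q w = F w) (nhds z)"
  proof -
    have "eventually (\<lambda>w. w \<in> - (zs ` {1..d})) (nhds z)"
      using op Suc.prems by (intro eventually_nhds_in_open) auto
    then show ?thesis by eventually_elim (use Suc.IH in \<open>auto simp: F_def\<close>)
  qed
  have "(deriv ^^ Suc k) Q z = deriv F z"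
    using deriv_cong_ev[OF ev refl] by simp
  also have "\<dots> = (\<Sum>j=1..d. - (\<alpha> j * (-1) ^ k * pochhammer (of_nat s) k) * of_nat (s + k) / (z - zs j) ^ (s + k + 1))"
  proof (rule DERIV_imp_deriv)
    show "(F has_field_derivative (\<Sum>j=1..d. - (\<alpha> j * (-1) ^ k * pochhammer (of_nat s) k) * of_nat (s + k) / (z - zs j) ^ (s + k + 1))) (at z)"
      unfolding F_def
      by (rule DERIV_sum, rule deriv_pow_term) (use Suc.prems in auto)
  qed
  also have "\<dots> = (\<Sum>j=1..d. \<alpha> j * (-1) ^ Suc k * pochhammer (of_nat s) (Suc k) / (z - zs j) ^ (s + Suc k))"
    by (intro sum.cong refl) (simp add: pochhammer_Suc algebra_simps)
  finally show ?case .
qed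

theorem proposition5p2:
  fixes s d n :: nat and \<alpha> zs :: "nat \<Rightarrow> complex" and Q :: "complex \<Rightarrow> complex"
  assumes "s > 0"
    and "\<And>z. Q z = (\<Sum>j=1..d. \<alpha> j / (z - zs j) ^ s)"
  shows "\<forall>z. z \<notin> zs ` {1..d} \<longrightarrow>
    (\<Sum>i=0..d. elem_sym zs d i z / pochhammer (of_nat (s + n)) i
        * (deriv ^^ i) ((deriv ^^ n) Q) z) = 0"
proof (intro allI impI)
  fix z assume z: "z \<notin> zs ` {1..d}"
  define m where "m = s + n"
  define t where "t = (\<lambda>j. - 1 / (z - zs j))"
  define C where "C = (\<lambda>j. \<alpha> j * (-1) ^ n * pochhammer (of_nat s) n / (z - zs j) ^ m)"
  have wne: "\<And>j. j \<in> {1..d} \<Longrightarrow> z - zs j \<noteq> 0" using z by auto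
  have Pne: "\<And>i. pochhammer (of_nat m :: complex) i \<noteq> 0"
  proof
    fix i assume "pochhammer (of_nat m :: complex) i = 0"
    then obtain k where "of_nat m = - (of_nat k :: complex)" unfolding pochhammer_eq_0_iff by auto
    hence "of_nat (m + k) = (0::complex)" by simp
    hence "m + k = 0" by (simp only: of_nat_eq_0_iff)
    thus False using assms(1) unfolding m_def by simp
  qed
  have step: "elem_sym zs d i z / pochhammer (of_nat (s + n)) i * (deriv ^^ i) ((deriv ^^ n) Q) z
      = elem_sym zs d i z * (\<Sum>j=1..d. C j * t j ^ i)" for i
  proof -
    have "(deriv ^^ i) ((deriv ^^ n) Q) z = (deriv ^^ (i + n)) Q z"
      by (simp add: funpow_add)
    also have "\<dots> = (\<Sum>j=1..d. \<alpha> j * (-1) ^ (i + n) * pochhammer (of_nat s) (i + n) / (z - zs j) ^ (s + (i + n)))"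
      by (rule derivs_Q[OF assms(2) z])
    also have "\<dots> = pochhammer (of_nat m) i * (\<Sum>j=1..d. C j * t j ^ i)"
      unfolding sum_distrib_left
    proof (intro sum.cong refl)
      fix j assume j: "j \<in> {1..d}"
      have po: "pochhammer (of_nat s :: complex) (i + n) = pochhammer (of_nat s) n * pochhammer (of_nat m) i"
        unfolding m_def using pochhammer_product'[of "of_nat s :: complex" n i]
        by (simp add: add.commute)
      have pw: "(z - zs j) ^ (s + (i + n)) = (z - zs j) ^ m * (z - zs j) ^ i"
        unfolding m_def by (simp add: power_add[symmetric] algebra_simps)
      have tj: "t j ^ i = (-1) ^ i / (z - zs j) ^ i" unfolding t_def by (rule power_divide)
      show "\<alpha> j * (-1) ^ (i + n) * pochhammer (of_nat s) (i + n) / (z - zs j) ^ (s + (i + n))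
          = pochhammer (of_nat m) i * (C j * t j ^ i)"
        unfolding po pw C_def tj using wne[OF j]
        by (simp add: power_divide power_add field_simps)
    qed
    finally show ?thesis using Pne unfolding m_def by simp
  qed
  have "(\<Sum>i=0..d. elem_sym zs d i z / pochhammer (of_nat (s + n)) i * (deriv ^^ i) ((deriv ^^ n) Q) z)
      = (\<Sum>i=0..d. \<Sum>j=1..d. C j * (elem_sym zs d i z * t j ^ i))"
    unfolding step sum_distrib_left by (intro sum.cong refl) (simp add: algebra_simps)
  also have "\<dots> = (\<Sum>j=1..d. C j * (\<Sum>i=0..d. elem_sym zs d i z * t j ^ i))"
    by (subst sum.swap) (simp add: sum_distrib_left)
  also have "\<dots> = (\<Sum>j=1..d. C j * (\<Prod>k\<in>{1..d}. t j * (z - zs k) + 1))"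
    by (simp add: esym_gen)
  also have "\<dots> = 0"
  proof (intro sum.neutral ballI)
    fix j assume j: "j \<in> {1..d}"
    have "t j * (z - zs j) + 1 = 0" using wne[OF j] by (simp add: t_def)
    hence "(\<Prod>k\<in>{1..d}. t j * (z - zs k) + 1) = 0"
      using j by (intro prod_zero) auto
    thus "C j * (\<Prod>k\<in>{1..d}. t j * (z - zs k) + 1) = 0" by simp
  qed
  finally show "(\<Sum>i=0..d. elem_sym zs d i z / pochhammer (of_nat (s + n)) i * (deriv ^^ i) ((deriv ^^ n) Q) z) = 0" .
qed

end
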